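(* Let $a>0$, $B_u>0$, $B_v<0$, $\Delta x\in(0,1]$, $\varepsilon>0$, and let $\alpha<(3+2\sqrt2)B_v^{-1}$. Assume $2aB_v+\tfrac{\Delta x}{\varepsilon}B_u>0$. Then $$-\frac{aB_u^2}{B_v}\alpha+\frac{B_u}{B_v}\frac{\Delta x}{2\varepsilon}<-a(1-B_v\alpha)-\sqrt{-2a\bigl(2aB_v+\tfrac{\Delta x}{\varepsilon}B_u\bigr)\alpha}.$$ *)

theory Defs
  imports Complex_Main
begin

end

theory Submission
  imports Defs
begin

lemma amgm_sqrt:
  fixes x y :: real
  assumes "x \<ge> 0" "y \<ge> 0"
  shows "sqrt (4 * x * y) \<le> x + y"
proof -
  have "4 * x * y \<le> (x + y)^2" proof -
    have "(x+y)^2 - 4*x*y = (x-y)^2" by (simp add: power2_eq_square algebra_simps)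
    thus ?thesis by (smt (verit) zero_le_power2)
  qed
  hence "sqrt (4 * x * y) \<le> sqrt ((x+y)^2)" by (rule real_sqrt_le_mono)
  thus ?thesis using assms by simp
qed

theorem lemma4:
  fixes a B_u B_v dx \<epsilon> \<alpha> :: real
  assumes "a > 0" and "B_u > 0" and "B_v < 0"
    and "0 < dx" and "dx \<le> 1" and "\<epsilon> > 0"
    and "\<alpha> < (3 + 2 * sqrt 2) / B_v"
    and "2 * a * B_v + (dx / \<epsilon>) * B_u > 0"
  shows "- (a * B_u^2 / B_v) * \<alpha> + (B_u / B_v) * (dx / (2 * \<epsilon>))
         < - a * (1 - B_v * \<alpha>) - sqrt (- 2 * a * (2 * a * B_v + (dx / \<epsilon>) * B_u) * \<alpha>)"
proof -
  define k where "k = dx / \<epsilon>"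
  define b where "b = - B_v"
  define \<beta> where "\<beta> = - \<alpha>"
  define c where "c = 2 * a * B_v + k * B_u"
  have b0: "b > 0" using assms(3) b_def by simp
  have c0: "c > 0" using assms(8) c_def k_def by simp
  have "(3 + 2 * sqrt 2) / B_v < 0" using assms(3) by (simp add: divide_pos_neg add_pos_nonneg)
  hence be0: "\<beta> > 0" using assms(7) \<beta>_def by simp
  have x0: "a * b * \<beta> \<ge> 0" using assms(1) b0 be0 by simp
  have y0: "c / (2 * b) \<ge> 0" using c0 b0 by simp
  have "sqrt (4 * (a * b * \<beta>) * (c / (2*b))) \<le> a * b * \<beta> + c / (2*b)"
    by (rule amgm_sqrt[OF x0 y0])
  moreover have "4 * (a * b * \<beta>) * (c / (2*b)) = - 2 * a * (2 * a * B_v + (dx / \<epsilon>) * B_u) * \<alpha>"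
    using b0 by (simp add: c_def k_def \<beta>_def field_simps)
  ultimately have S: "sqrt (- 2 * a * (2 * a * B_v + (dx / \<epsilon>) * B_u) * \<alpha>) \<le> a * b * \<beta> + c / (2*b)" by simp
  have P: "a * B_u^2 * \<beta> / b > 0" using assms(1,2) be0 b0 by simp
  have E: "- (a * B_u^2 / B_v) * \<alpha> + (B_u / B_v) * (dx / (2 * \<epsilon>)) + a * (1 - B_v * \<alpha>)
        = - a * b * \<beta> - a * B_u^2 * \<beta> / b - c / (2 * b)"
    using b0 assms(6) by (simp add: b_def \<beta>_def c_def k_def field_simps)
  show ?thesis using S P E by linarith
qed

end
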